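(* Assume product-form weights $w^t_i=u(i)v(m_t)$. Let $x_{1:n}\in\mathcal X^n$ and let $2\le t\le n-1$ be such that $x_t\in\mathcal A_{t-1}$ (an old symbol) and $x_{t+1}\notin\mathcal A_t$ (a new symbol). Let $x'_{1:n}$ be the sequence obtained from $x_{1:n}$ by swapping $x_t$ and $x_{t+1}$. Then $R^{\vec\beta^*}_S(x'_{1:n}) > R^{\vec\beta^*}_S(x_{1:n})$. Consequently, among all orderings of a fixed multiset of symbols, the redundancy $R^{\vec\beta^*}_S$ is maximized by an ordering in which all $m$ distinct symbols appear in the first $m$ positions.
   Context: Let $\mathcal X$ be a finite base alphabet. For $x_{1:n}\in\mathcal X^n$, let $n_i$ be the number of occurrences of $i$, $\mathcal A=\{x_1,\dots,x_n\}$, $m=|\mathcal A|$; for $0\le t\le n$, $\mathcal A_t=\{x_1,\dots,x_t\}$ ($\mathcal A_0=\emptyset$), $m_t=|\mathcal A_t|$, $n^t_i$ the count of $i$ in $x_{1:t}$. Product-form weights: $u:\mathcal X\to(0,\infty)$, $v:\{0,1,\dots\}\to(0,\infty)$ with $w^t_i:=u(i)v(m_t)$ and $\sum_{k\in\mathcal X\setminus\mathcal A_t}w^t_k\le1$. Adaptive model: $\beta^*_t:=m_t/\ln\frac{t+1}{m_t}$ for $t\ge1$, $\beta^*_0\in(0,\infty)$ fixed; $S^{\vec\beta^*}(x_{t+1}=i\mid x_{1:t})=n^t_i/(t+\beta^*_t)$ if $n^t_i>0$ and $\beta^*_t w^t_i/(t+\beta^*_t)$ if $n^t_i=0$; $S^{\vec\beta^*}(x_{1:n})=\prod_{t=0}^{n-1}S^{\vec\beta^*}(x_{t+1}\mid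 x_{1:t})$. Redundancy $R^{\vec\beta^*}_S(x_{1:n}):=\ln\big(n^{-n}\prod_{j\in\mathcal A}n_j^{n_j}\big)-\ln S^{\vec\beta^*}(x_{1:n})$. Natural logarithms. *)

theory Defs
  imports Complex_Main "HOL-Library.Multiset"
begin

text \<open>A sequence x_{1:n} is a list xs of length n; x_t = xs ! (t-1);
  the prefix x_{1:t} is take t xs. Weights are in product form
  w^t_i = u i * v (m_t).\<close>

definition m_t :: "'a list \<Rightarrow> nat \<Rightarrow> nat" where
  "m_t xs t = card (set (take t xs))"

definition n_t :: "'a list \<Rightarrow> nat \<Rightarrow> 'a \<Rightarrow> nat" where
  "n_t xs t i = count_list (take t xs) i"

definition beta_star :: "real \<Rightarrow> 'a list \<Rightarrow> nat \<Rightarrow> real" where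
  "beta_star b0 xs t =
     (if t = 0 then b0 else real (m_t xs t) / ln (real (t + 1) / real (m_t xs t)))"

definition S_cond :: "('a \<Rightarrow> real) \<Rightarrow> (nat \<Rightarrow> real) \<Rightarrow> real \<Rightarrow> 'a list \<Rightarrow> nat \<Rightarrow> 'a \<Rightarrow> real" where
  "S_cond u v b0 xs t i =
     (if n_t xs t i > 0 then real (n_t xs t i) / (real t + beta_star b0 xs t)
      else beta_star b0 xs t * (u i * v (m_t xs t)) / (real t + beta_star b0 xs t))"

definition S_seq :: "('a \<Rightarrow> real) \<Rightarrow> (nat \<Rightarrow> real) \<Rightarrow> real \<Rightarrow> 'a list \<Rightarrow> real" where
  "S_seq u v b0 xs = (\<Prod>t<length xs. S_cond u v b0 xs t (xs ! t))"

definition redundancy :: "('a \<Rightarrow> real) \<Rightarrow> (nat \<Rightarrow> real) \<Rightarrow> real \<Rightarrow> 'a list \<Rightarrow> real" where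
  "redundancy u v b0 xs =
     ln ((\<Prod>j\<in>set xs. real (count_list xs j) ^ count_list xs j) / real (length xs) ^ length xs)
     - ln (S_seq u v b0 xs)"

end

theory Submission
  imports Defs
begin

lemma S_cond_mset:
  assumes "mset (take k xs) = mset (take k ys)"
  shows "S_cond u v b0 xs k i = S_cond u v b0 ys k i"
proof -
  have c: "count_list (take k xs) = count_list (take k ys)"
    using assms by (intro ext) (metis count_mset)
  have s: "set (take k xs) = set (take k ys)"
    using assms by (metis set_mset_mset)
  show ?thesis unfolding S_cond_def beta_star_def n_t_def m_t_def using c s by simp
qed

lemma key_ineq:
  fixes a b c m t :: real
  assumes "a > 0" "b > 0" "c > 0" "m \<ge> 1" "t > 0" "t * (b - a) < 1" "a > c"
  shows "(m/a)*(t+m/b) < (m/b)*(t+(m+1)/c)"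
proof -
  have "(m+1) * a > (m+1) * c" using assms by (intro mult_strict_left_mono) auto
  hence "(m+1) * a / c > m + 1" using assms by (simp add: field_simps)
  hence h: "t*b + m < t*a + (m+1)*a/c" using assms(6) by (simp add: algebra_simps)
  have "(m/a)*(t+m/b) = (m/(a*b)) * (t*b + m)" using assms by (simp add: field_simps)
  also have "\<dots> < (m/(a*b)) * (t*a + (m+1)*a/c)"
    using h assms by (intro mult_strict_left_mono) auto
  also have "\<dots> = (m/b)*(t+(m+1)/c)" using assms by (simp add: field_simps)
  finally show ?thesis .
qed

lemma beta_pos:
  assumes "1 \<le> k" "1 \<le> m_t xs k" "m_t xs k \<le> k"
  shows "beta_star b0 xs k = real (m_t xs k) / ln (real (k+1) / real (m_t xs k))"
    "beta_star b0 xs k > 0"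
proof -
  show "beta_star b0 xs k = real (m_t xs k) / ln (real (k+1) / real (m_t xs k))"
    using assms by (simp add: beta_star_def)
  have "real (k+1) / real (m_t xs k) > 1" using assms by (simp add: field_simps)
  hence "ln (real (k+1) / real (m_t xs k)) > 0" by simp
  thus "beta_star b0 xs k > 0" using assms by (simp add: beta_star_def)
qed

lemma m_t_le: "m_t xs k \<le> k"
  unfolding m_t_def by (metis card_length length_take min.bounded_iff order.refl le_trans)

lemma S_cond_pos:
  assumes u_pos: "\<And>i. u i > 0" and v_pos: "\<And>k. v k > 0" and "b0 > 0" and "k < length xs"
  shows "S_cond u v b0 xs k i > 0"
proof -
  have bp: "beta_star b0 xs k > 0"
  proof (cases "k = 0")
    case True thus ?thesis using assms by (simp add: beta_star_def)
  next
    case False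
    have "take k xs \<noteq> []" using False assms(4) by auto
    hence "m_t xs k \<ge> 1" unfolding m_t_def
      by (metis One_nat_def Suc_leI card_gt_0_iff finite_set set_empty2)
    thus ?thesis using beta_pos(2)[of k xs b0] False m_t_le[of xs k] by simp
  qed
  show ?thesis unfolding S_cond_def using bp u_pos v_pos
    by (auto simp: n_t_def intro!: divide_pos_pos mult_pos_pos add_pos_nonneg)
qed

lemma logs:
  fixes t m :: nat
  assumes "1 \<le> m" "m + 1 \<le> t"
  shows "ln (real t / m) > 0" "ln (real (t+1)/m) > 0" "ln (real (t+1)/(m+1)) > 0"
    "real t * (ln (real (t+1)/m) - ln (real t / m)) < 1"
    "ln (real t / m) > ln (real (t+1)/(m+1))"
proof -
  have m0: "real m > 0" using assms by simp
  show "ln (real t / m) > 0" using assms by (simp add: field_simps)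
  show "ln (real (t+1)/m) > 0" using assms by (simp add: field_simps)
  show "ln (real (t+1)/(m+1)) > 0" using assms by (simp add: field_simps)
  have "ln (real (t+1)/m) - ln (real t / m) = ln (1 + 1/real t)"
    using assms m0 by (simp add: ln_div field_simps)
  also have "\<dots> < 1 / real t" using assms by (intro ln_add_one_self_less_self) simp
  finally show "real t * (ln (real (t+1)/m) - ln (real t / m)) < 1"
    using assms by (simp add: field_simps)
  have "real (t+1)/(m+1) < real t / m" using assms m0 by (simp add: field_simps)
  thus "ln (real t / m) > ln (real (t+1)/(m+1))"
    using assms by (intro ln_less_cancel_iff[THEN iffD2]) auto
qed

lemma swap_part:
  fixes u :: "'a \<Rightarrow> real"
  assumes u_pos: "\<And>i. u i > 0" and v_pos: "\<And>k. v k > 0" and b0_pos: "b0 > 0"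
    and t2: "2 \<le> t" and tn: "t \<le> length xs - 1"
    and old: "xs ! (t - 1) \<in> set (take (t - 1) xs)"
    and new: "xs ! t \<notin> set (take t xs)"
  shows "redundancy u v b0 (xs[t - 1 := xs ! t, t := xs ! (t - 1)]) > redundancy u v b0 xs"
proof -
  define ys where "ys = xs[t - 1 := xs ! t, t := xs ! (t - 1)]"
  define n where "n = length xs"
  define p where "p = take (t - 1) xs"
  define x where "x = xs ! (t - 1)"
  define y where "y = xs ! t"
  have tlt: "t < n" using tn t2 n_def by linarith
  have len: "length ys = n" by (simp add: ys_def n_def)
  have ms: "mset ys = mset xs" unfolding ys_def using tlt n_def by (intro mset_swap) auto
  have ys1: "ys ! (t-1) = y" using tlt t2 by (simp add: ys_def y_def n_def)
  have ys2: "ys ! t = x" using tlt t2 by (simp add: ys_def x_def n_def)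
  have tp: "take (t-1) ys = p" by (simp add: ys_def p_def)
  have tx: "take t xs = p @ [x]" using tlt t2 unfolding p_def x_def n_def
    by (metis Suc_diff_1 less_le_trans order.strict_trans2 pos2 take_Suc_conv_app_nth less_imp_le_nat
        diff_less zero_less_one)
  have lp: "length p = t - 1" using tlt unfolding p_def n_def by simp
  have ty: "take t ys = p @ [y]"
  proof -
    have "take t ys = take t (xs[t-1 := y])" by (simp add: ys_def y_def)
    also have "\<dots> = (take t xs)[t-1 := y]" by (simp add: take_update_swap)
    also have "\<dots> = p @ [y]" using tx lp by (metis list_update_length)
    finally show ?thesis .
  qed
  have oth: "S_cond u v b0 ys k (ys ! k) = S_cond u v b0 xs k (xs ! k)"
    if "k \<in> {..<n} - {t-1} - {t}" for k
  proof -
    have k: "k < n" "k \<noteq> t - 1" "k \<noteq> t" using that by auto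
    have e: "ys ! k = xs ! k" using k by (simp add: ys_def)
    have "mset (take k ys) = mset (take k xs)"
    proof (cases "k < t - 1")
      case True thus ?thesis by (simp add: ys_def)
    next
      case False
      hence kt: "k > t" using k by linarith
      have "take k ys = (take k xs)[t - 1 := (take k xs) ! t, t := (take k xs) ! (t - 1)]"
        using kt by (simp add: ys_def take_update_swap)
      also have "mset \<dots> = mset (take k xs)" using kt k n_def by (intro mset_swap) auto
      finally show ?thesis .
    qed
    thus ?thesis using e S_cond_mset by metis
  qed
  have fin: "finite {..<n}" by simp
  have split: "\<And>zs. length zs = n \<Longrightarrow> S_seq u v b0 zs =
      S_cond u v b0 zs (t-1) (zs ! (t-1)) * (S_cond u v b0 zs t (zs ! t) *
      (\<Prod>k\<in>{..<n} - {t-1} - {t}. S_cond u v b0 zs k (zs ! k)))"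
  proof -
    fix zs :: "'a list" assume "length zs = n"
    moreover have "t - 1 \<in> {..<n}" "t \<in> {..<n} - {t-1}" using tlt t2 by auto
    ultimately show "?thesis zs" unfolding S_seq_def
      using prod.remove[of "{..<n}" "t-1" "\<lambda>k. S_cond u v b0 zs k (zs!k)"]
        prod.remove[of "{..<n} - {t-1}" t "\<lambda>k. S_cond u v b0 zs k (zs!k)"] by simp
  qed
  define P where "P = (\<Prod>k\<in>{..<n} - {t-1} - {t}. S_cond u v b0 xs k (xs ! k))"
  have Ppos: "P > 0" unfolding P_def using S_cond_pos[OF u_pos v_pos b0_pos] n_def
    by (intro prod_pos) auto
  have Sx: "S_seq u v b0 xs = S_cond u v b0 xs (t-1) x * S_cond u v b0 xs t y * P"
    using split[of xs] n_def by (simp add: P_def x_def y_def)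
  have Sy: "S_seq u v b0 ys = S_cond u v b0 ys (t-1) y * S_cond u v b0 ys t x * P"
    using split[of ys] len oth ys1 ys2 by (simp add: P_def)
  define m where "m = card (set p)"
  have xp: "x \<in> set p" using old by (simp add: x_def p_def)
  have yp: "y \<notin> set p" using new tx by (simp add: y_def)
  have yx: "y \<noteq> x" using xp yp by auto
  have m1: "1 \<le> m" using xp unfolding m_def
    by (metis One_nat_def Suc_leI card_gt_0_iff empty_iff finite_set)
  have mle: "m + 1 \<le> t" using lp t2 unfolding m_def using card_length[of p] by linarith
  define c where "c = count_list p x"
  have c0: "c > 0" using xp unfolding c_def by (metis count_mset count_mset_gt_0)
  have cy: "count_list p y = 0" using yp by (metis count_mset count_mset_0_iff)
  have mtx1: "m_t xs (t-1) = m" "m_t ys (t-1) = m" using tp by (simp_all add: m_t_def m_def p_def)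
  have mtx2: "m_t xs t = m" using tx xp by (simp add: m_t_def m_def insert_absorb)
  have mty2: "m_t ys t = m + 1" using ty yp by (simp add: m_t_def m_def)
  have rt: "real (t - 1 + 1) = real t" using t2 by simp
  define A where "A = real m / ln (real t / real m)"
  define B where "B = real m / ln (real (t+1) / real m)"
  define C where "C = real (m+1) / ln (real (t+1) / real (m+1))"
  note L = logs[OF m1 mle]
  have Ap: "A > 0" "B > 0" "C > 0" using L m1 by (simp_all add: A_def B_def C_def)
  have bx1: "beta_star b0 xs (t-1) = A" "beta_star b0 ys (t-1) = A"
    using t2 mtx1 rt by (simp_all add: beta_star_def A_def)
  have bx2: "beta_star b0 xs t = B" using t2 mtx2 by (simp add: beta_star_def B_def)
  have by2: "beta_star b0 ys t = C" using t2 mty2 by (simp add: beta_star_def C_def)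
  define U where "U = u y * v m"
  have Up: "U > 0" using u_pos v_pos by (simp add: U_def mult_pos_pos)
  have rt1: "real (t-1) = real t - 1" using t2 by simp
  have a1: "S_cond u v b0 xs (t-1) x = c / (real t - 1 + A)"
    using c0 bx1 mtx1 rt1 p_def by (simp add: S_cond_def n_t_def c_def)
  have a2: "S_cond u v b0 xs t y = B * U / (real t + B)"
    using bx2 mtx2 tx cy yx by (simp add: S_cond_def n_t_def U_def)
  have b1: "S_cond u v b0 ys (t-1) y = A * U / (real t - 1 + A)"
    using bx1 mtx1 rt1 tp cy by (simp add: S_cond_def n_t_def U_def)
  have b2: "S_cond u v b0 ys t x = c / (real t + C)"
    using c0 by2 ty yx by (simp add: S_cond_def n_t_def c_def)
  have KI: "A * (real t + B) < B * (real t + C)"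
    using key_ineq[of "ln (real t / m)" "ln (real (t+1)/m)" "ln (real (t+1)/(m+1))" "real m" "real t"]
      L m1 t2 by (simp add: A_def B_def C_def add.commute)
  have t1A: "real t - 1 + A > 0" using t2 Ap by simp
  have "A / (real t + C) < B / (real t + B)"
    using KI Ap t2 by (simp add: field_simps)
  hence "(c * U / (real t - 1 + A)) * (A / (real t + C)) < (c * U / (real t - 1 + A)) * (B / (real t + B))"
    using c0 Up t1A by (intro mult_strict_left_mono) auto
  hence "(c * U / (real t - 1 + A)) * (A / (real t + C)) * P < (c * U / (real t - 1 + A)) * (B / (real t + B)) * P"
    using Ppos by (intro mult_strict_right_mono) auto
  moreover have "S_seq u v b0 ys = (c * U / (real t - 1 + A)) * (A / (real t + C)) * P"
    unfolding Sy b1 b2 by simp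
  moreover have "S_seq u v b0 xs = (c * U / (real t - 1 + A)) * (B / (real t + B)) * P"
    unfolding Sx a1 a2 by simp
  ultimately have ineq: "S_seq u v b0 ys < S_seq u v b0 xs" by simp
  have "S_cond u v b0 ys (t-1) y > 0" "S_cond u v b0 ys t x > 0"
    using S_cond_pos[of u v b0 _ ys] u_pos v_pos b0_pos len tlt by auto
  hence Sy0: "S_seq u v b0 ys > 0" unfolding Sy using Ppos by simp
  have E: "(\<Prod>j\<in>set ys. real (count_list ys j) ^ count_list ys j) / real (length ys) ^ length ys
     = (\<Prod>j\<in>set xs. real (count_list xs j) ^ count_list xs j) / real (length xs) ^ length xs"
  proof -
    have "set ys = set xs" by (metis ms set_mset_mset)
    moreover have "count_list ys = count_list xs" using ms by (intro ext) (metis count_mset)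
    moreover have "length ys = length xs" by (metis ms size_mset)
    ultimately show ?thesis by simp
  qed
  have "ln (S_seq u v b0 ys) < ln (S_seq u v b0 xs)" using ineq Sy0 by simp
  thus ?thesis unfolding redundancy_def ys_def[symmetric] E by simp
qed

lemma distinct_take_new:
  "(\<forall>j<k. zs ! j \<notin> set (take j zs)) \<Longrightarrow> k \<le> length zs \<Longrightarrow> distinct (take k zs)"
proof (induction k)
  case 0 thus ?case by simp
next
  case (Suc k)
  have "take (Suc k) zs = take k zs @ [zs ! k]" using Suc.prems by (simp add: take_Suc_conv_app_nth)
  thus ?case using Suc by simp
qed

lemma exists_swap:
  assumes "\<not> distinct (take (card (set zs)) zs)"
  shows "\<exists>t. 2 \<le> t \<and> t \<le> length zs - 1 \<and> zs ! (t - 1) \<in> set (take (t - 1) zs)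
            \<and> zs ! t \<notin> set (take t zs)"
proof (rule ccontr)
  assume nt: "\<not> ?thesis"
  have step: "zs ! (j+1) \<in> set (take (j+1) zs)"
    if "1 \<le> j" "j + 1 < length zs" "zs ! j \<in> set (take j zs)" for j
  proof (rule ccontr)
    assume "zs ! (j+1) \<notin> set (take (j+1) zs)"
    hence "2 \<le> j+1 \<and> j+1 \<le> length zs - 1 \<and> zs ! (j+1 - 1) \<in> set (take (j+1 - 1) zs)
            \<and> zs ! (j+1) \<notin> set (take (j+1) zs)" using that by auto
    thus False using nt by blast
  qed
  have ex: "\<exists>k. k < length zs \<and> zs ! k \<in> set (take k zs)"
  proof (rule ccontr)
    assume "\<not> ?thesis"
    hence "distinct (take (length zs) zs)" by (intro distinct_take_new) auto
    hence "distinct zs" by simp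
    thus False using assms by simp
  qed
  define k where "k = (LEAST k. k < length zs \<and> zs ! k \<in> set (take k zs))"
  have kP: "k < length zs \<and> zs ! k \<in> set (take k zs)" unfolding k_def using ex by (rule LeastI_ex)
  have kmin: "zs ! j \<notin> set (take j zs)" if "j < k" for j
    using not_less_Least[OF that[unfolded k_def]] kP that by (auto simp: k_def)
  have k1: "1 \<le> k" using kP by (cases k) auto
  have dk: "distinct (take k zs)" using kmin kP by (intro distinct_take_new) auto
  have old: "zs ! (k+d) \<in> set (take (k+d) zs)" if "k + d < length zs" for d
    using that
  proof (induction d)
    case 0 thus ?case using kP by simp
  next
    case (Suc d)
    thus ?case using step[of "k+d"] k1 by simp
  qed
  have st: "set (take (k+d) zs) = set (take k zs)" if "k + d \<le> length zs" for d
    using that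
  proof (induction d)
    case 0 thus ?case by simp
  next
    case (Suc d)
    have "take (k + Suc d) zs = take (k+d) zs @ [zs ! (k+d)]"
      using Suc.prems by (simp add: take_Suc_conv_app_nth)
    thus ?case using Suc old[of d] by auto
  qed
  have "set zs = set (take k zs)" using st[of "length zs - k"] kP by simp
  hence "card (set zs) = k" using dk kP by (simp add: distinct_card)
  thus False using assms dk by simp
qed

lemma finite_perms: "finite {zs. mset zs = mset (xs :: 'a list)}"
proof -
  have "{zs. mset zs = mset xs} \<subseteq> {zs. set zs \<subseteq> set xs \<and> length zs = length xs}"
    by (auto dest: mset_eq_setD mset_eq_length)
  moreover have "finite {zs. set zs \<subseteq> set xs \<and> length zs = length xs}"
    by (rule finite_lists_length_eq) simp
  ultimately show ?thesis by (rule finite_subset)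
qed

theorem mainTheorem6:
  fixes u :: "'a::finite \<Rightarrow> real" and v :: "nat \<Rightarrow> real" and b0 :: real
  assumes u_pos: "\<And>i. u i > 0"
    and v_pos: "\<And>k. v k > 0"
    and weights: "\<And>A :: 'a set. (\<Sum>k\<in>UNIV - A. u k * v (card A)) \<le> 1"
    and b0_pos: "b0 > 0"
  shows "(\<forall>(xs :: 'a list) t. 2 \<le> t \<and> t \<le> length xs - 1
            \<and> xs ! (t - 1) \<in> set (take (t - 1) xs)
            \<and> xs ! t \<notin> set (take t xs)
          \<longrightarrow> redundancy u v b0 (xs[t - 1 := xs ! t, t := xs ! (t - 1)])
              > redundancy u v b0 xs)
       \<and> (\<forall>xs :: 'a list. \<exists>ys. mset ys = mset xs
            \<and> distinct (take (card (set xs)) ys)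
            \<and> (\<forall>zs. mset zs = mset xs \<longrightarrow> redundancy u v b0 zs \<le> redundancy u v b0 ys))"
proof (intro conjI allI impI)
  fix xs :: "'a list" and t
  assume h: "2 \<le> t \<and> t \<le> length xs - 1 \<and> xs ! (t - 1) \<in> set (take (t - 1) xs)
            \<and> xs ! t \<notin> set (take t xs)"
  show "redundancy u v b0 (xs[t - 1 := xs ! t, t := xs ! (t - 1)]) > redundancy u v b0 xs"
    by (rule swap_part[where u=u and v=v]) (use u_pos v_pos b0_pos h in auto)
next
  fix xs :: "'a list"
  define S where "S = {zs. mset zs = mset xs}"
  define f where "f = redundancy u v b0"
  have fS: "finite (f ` S)" using finite_perms[of xs] by (simp add: S_def)
  have neS: "f ` S \<noteq> {}" by (auto simp: S_def)
  obtain ys where ys: "ys \<in> S" "f ys = Max (f ` S)" using Max_in[OF fS neS] by auto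
  have mx: "f zs \<le> f ys" if "zs \<in> S" for zs using Max_ge[OF fS] that ys(2) by auto
  have ms: "mset ys = mset xs" using ys(1) by (simp add: S_def)
  have cs: "card (set ys) = card (set xs)" by (metis ms set_mset_mset)
  have "distinct (take (card (set xs)) ys)"
  proof (rule ccontr)
    assume "\<not> ?thesis"
    then obtain t where t: "2 \<le> t \<and> t \<le> length ys - 1 \<and> ys ! (t - 1) \<in> set (take (t - 1) ys)
            \<and> ys ! t \<notin> set (take t ys)" using exists_swap[of ys] cs by auto
    define ys' where "ys' = ys[t - 1 := ys ! t, t := ys ! (t - 1)]"
    have fy: "f ys' > f ys" unfolding f_def ys'_def
      by (rule swap_part[where u=u and v=v]) (use u_pos v_pos b0_pos t in auto)
    have "mset ys' = mset ys" unfolding ys'_def using t by (intro mset_swap) auto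
    hence "ys' \<in> S" using ms by (simp add: S_def)
    moreover note fy
    ultimately show False using mx by fastforce
  qed
  thus "\<exists>ys. mset ys = mset xs \<and> distinct (take (card (set xs)) ys)
            \<and> (\<forall>zs. mset zs = mset xs \<longrightarrow> redundancy u v b0 zs \<le> redundancy u v b0 ys)"
    using ms mx by (auto simp: S_def f_def)
qed

end
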